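(* Assume $1-1/\gamma<\beta<1$, let $\chi=\frac{1-\gamma(1-\beta)}{\beta}$ and $\epsilon\in(0,1)$. Define $$B_{N,\epsilon}=\Big\{\sum_{k=1}^N w_{I^N_k}\mathbf 1\{I^N_k>N^{\chi+\epsilon}\}<N^{-\epsilon\beta/2}\Big\}.$$ Then $\lim_{N\to\infty}\log(N)\,\mathbb P(B_{N,\epsilon}^c)=0$.
   Context: Fix $\gamma>1$, $\beta\in(0,1)$. $\Xi$ is a Poisson point process on $(0,\infty)$ with intensity $x^{-2}dx$ and atoms $w_1>w_2>\cdots$. Conditionally on $\Xi$, $I^N=(I^N_1,\dots,I^N_N)$ are $N$ indices sampled without replacement from $\{1,\dots,\lceil N^\gamma\rceil\}$ with weights $w_i^\beta$ (each successive draw picks a not-yet-drawn index $i$ with probability proportional to $w_i^\beta$ among the not-yet-drawn ones). *)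

theory Defs
  imports "HOL-Probability.Probability"
begin

definition ppp_intensity :: "real set \<Rightarrow> ennreal" where
  "ppp_intensity A = (\<integral>\<^sup>+ x. ennreal (1 / x\<^sup>2) * indicator A x \<partial>lborel)"

definition atom_count :: "(nat \<Rightarrow> real) \<Rightarrow> real set \<Rightarrow> nat" where
  "atom_count a A = card {i. 1 \<le> i \<and> a i \<in> A}"

text \<open>w : the atoms w_1 > w_2 > ... (index 0 unused) of a Poisson point process on (0,oo)
  with intensity x^(-2) dx, defined on the probability space M: for pairwise disjoint Borel
  sets A_0,...,A_{k-1} in (0,oo) of finite intensity, the counts are a.s. finite, independent,
  and Poisson distributed with mean the intensity.\<close>
definition is_ppp_atoms :: "'a measure \<Rightarrow> ('a \<Rightarrow> nat \<Rightarrow> real) \<Rightarrow> bool" where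
  "is_ppp_atoms M w \<longleftrightarrow>
     prob_space M \<and>
     (\<forall>i. (\<lambda>\<omega>. w \<omega> i) \<in> borel_measurable M) \<and>
     (\<forall>\<omega>\<in>space M. \<forall>i\<ge>1. 0 < w \<omega> i \<and> w \<omega> (Suc i) < w \<omega> i) \<and>
     (\<forall>(k::nat) (A::nat \<Rightarrow> real set).
        (\<forall>j<k. A j \<in> sets borel \<and> A j \<subseteq> {0<..} \<and> ppp_intensity (A j) < \<infinity>) \<and>
        disjoint_family_on A {..<k} \<longrightarrow>
          (\<forall>j<k. AE \<omega> in M. finite {i. 1 \<le> i \<and> w \<omega> i \<in> A j}) \<and>
          prob_space.indep_vars M (\<lambda>_. count_space UNIV)
             (\<lambda>j \<omega>. atom_count (w \<omega>) (A j)) {..<k} \<and>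
          (\<forall>j<k. \<forall>n::nat.
             measure M {\<omega> \<in> space M. atom_count (w \<omega>) (A j) = n} =
               (let \<mu> = enn2real (ppp_intensity (A j)) in \<mu> ^ n / fact n * exp (- \<mu>))))"

definition weighted_pmf :: "(nat \<Rightarrow> real) \<Rightarrow> nat set \<Rightarrow> nat pmf" where
  "weighted_pmf f A = embed_pmf (\<lambda>i. if i \<in> A then f i / (\<Sum>j\<in>A. f j) else 0)"

fun sample_wor :: "(nat \<Rightarrow> real) \<Rightarrow> nat set \<Rightarrow> nat \<Rightarrow> nat list pmf" where
  "sample_wor f A 0 = return_pmf []"
| "sample_wor f A (Suc n) =
     bind_pmf (weighted_pmf f A) (\<lambda>i. map_pmf (\<lambda>is. i # is) (sample_wor f (A - {i}) n))"

definition B_event :: "real \<Rightarrow> real \<Rightarrow> real \<Rightarrow> nat \<Rightarrow> (nat \<Rightarrow> real) \<Rightarrow> nat list \<Rightarrow> bool" where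
  "B_event \<beta> chi \<epsilon> N a I \<longleftrightarrow>
     (\<Sum>k<N. a (I ! k) * (if real (I ! k) > real N powr (chi + \<epsilon>) then 1 else 0))
       < real N powr (- \<epsilon> * \<beta> / 2)"

end

theory Submission
  imports Defs "HOL-Real_Asymp.Real_Asymp"
begin

lemma weighted_pmf_pmf:
  assumes "finite A" "\<And>i. i \<in> A \<Longrightarrow> 0 \<le> f i" "0 < sum f A"
  shows "pmf (weighted_pmf f A) i = (if i \<in> A then f i / sum f A else 0)"
  unfolding weighted_pmf_def
proof (rule pmf_embed_pmf)
  show "\<And>x. 0 \<le> (if x \<in> A then f x / sum f A else 0)" using assms by auto
  have "(\<integral>\<^sup>+ x. ennreal (if x \<in> A then f x / sum f A else 0) \<partial>count_space UNIV)
      = (\<Sum>x\<in>A. ennreal (if x \<in> A then f x / sum f A else 0))"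
    by (rule nn_integral_count_space') (use assms in auto)
  also have "\<dots> = ennreal (\<Sum>x\<in>A. f x / sum f A)"
    by (subst sum_ennreal) (use assms in auto)
  also have "(\<Sum>x\<in>A. f x / sum f A) = 1"
    using assms by (simp add: sum_divide_distrib[symmetric])
  finally show "(\<integral>\<^sup>+ x. ennreal (if x \<in> A then f x / sum f A else 0) \<partial>count_space UNIV) = 1"
    by simp
qed

lemma nn_integral_weighted_pmf:
  assumes "finite A" "\<And>i. i \<in> A \<Longrightarrow> 0 \<le> f i" "0 < sum f A"
  shows "(\<integral>\<^sup>+ i. h i \<partial>measure_pmf (weighted_pmf f A)) = (\<Sum>i\<in>A. ennreal (f i / sum f A) * h i)"
proof -
  have "(\<integral>\<^sup>+ i. h i \<partial>measure_pmf (weighted_pmf f A))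
     = (\<integral>\<^sup>+ i. ennreal (pmf (weighted_pmf f A) i) * h i \<partial>count_space UNIV)"
    by (rule nn_integral_measure_pmf)
  also have "\<dots> = (\<Sum>i\<in>A. ennreal (pmf (weighted_pmf f A) i) * h i)"
    by (rule nn_integral_count_space') (use assms in \<open>auto simp: weighted_pmf_pmf\<close>)
  also have "\<dots> = (\<Sum>i\<in>A. ennreal (f i / sum f A) * h i)"
    by (rule sum.cong) (use assms in \<open>auto simp: weighted_pmf_pmf\<close>)
  finally show ?thesis .
qed

lemma length_sample_wor: "I \<in> set_pmf (sample_wor f A n) \<Longrightarrow> length I = n"
  by (induction n arbitrary: A I) auto

lemma sample_bound:
  fixes f g :: "nat \<Rightarrow> real"
  assumes "finite A" "\<And>i. i \<in> A \<Longrightarrow> 0 \<le> f i" "\<And>i. 0 \<le> g i" "R > 0"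
    "\<And>B. B \<subseteq> A \<Longrightarrow> card A \<le> card B + n \<Longrightarrow> R \<le> sum f B"
  shows "(\<integral>\<^sup>+I. ennreal (sum_list (map g I)) \<partial>sample_wor f A n)
          \<le> ennreal (real n * (\<Sum>i\<in>A. g i * f i) / R)"
  using assms
proof (induction n arbitrary: A)
  case 0
  then show ?case by simp
next
  case (Suc n)
  let ?S = "\<Sum>i\<in>A. g i * f i"
  have RA: "R \<le> sum f A" using Suc.prems(5)[of A] by simp
  hence SA: "0 < sum f A" using Suc.prems(4) by linarith
  have S0: "0 \<le> ?S" using Suc.prems by (auto intro!: sum_nonneg)
  have IH: "(\<integral>\<^sup>+I. ennreal (sum_list (map g I)) \<partial>sample_wor f (A - {i}) n)
          \<le> ennreal (real n * ?S / R)" for i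
  proof -
    have "(\<integral>\<^sup>+I. ennreal (sum_list (map g I)) \<partial>sample_wor f (A - {i}) n)
          \<le> ennreal (real n * (\<Sum>j\<in>A - {i}. g j * f j) / R)"
    proof (rule Suc.IH)
      fix B assume B: "B \<subseteq> A - {i}" "card (A - {i}) \<le> card B + n"
      have "card A \<le> card B + Suc n"
      proof (cases "i \<in> A")
        case True
        then have "card (A - {i}) = card A - 1" using Suc.prems(1) by simp
        moreover have "card A \<ge> 1" using True Suc.prems(1) card_0_eq by fastforce
        ultimately show ?thesis using B by linarith
      next
        case False then show ?thesis using B by simp
      qed
      then show "R \<le> sum f B" using B Suc.prems(5) by auto
    qed (use Suc.prems in auto)
    also have "\<dots> \<le> ennreal (real n * ?S / R)"
      apply (rule ennreal_leI)
      apply (rule divide_right_mono[OF _ less_imp_le[OF Suc.prems(4)]])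
      apply (rule mult_left_mono)
       apply (rule sum_mono2)
      using Suc.prems by (auto intro: mult_nonneg_nonneg)
    finally show ?thesis .
  qed
  have "(\<integral>\<^sup>+I. ennreal (sum_list (map g I)) \<partial>sample_wor f A (Suc n))
     = (\<integral>\<^sup>+i. (\<integral>\<^sup>+I. ennreal (g i + sum_list (map g I)) \<partial>sample_wor f (A - {i}) n) \<partial>weighted_pmf f A)"
    by simp
  also have "\<dots> = (\<integral>\<^sup>+i. ennreal (g i) + (\<integral>\<^sup>+I. ennreal (sum_list (map g I)) \<partial>sample_wor f (A - {i}) n) \<partial>weighted_pmf f A)"
  proof (rule nn_integral_cong)
    fix i
    have "(\<integral>\<^sup>+I. ennreal (g i + sum_list (map g I)) \<partial>sample_wor f (A - {i}) n)
        = (\<integral>\<^sup>+I. ennreal (g i) + ennreal (sum_list (map g I)) \<partial>sample_wor f (A - {i}) n)"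
      by (rule nn_integral_cong) (use Suc.prems in \<open>auto intro!: ennreal_plus sum_list_nonneg\<close>)
    also have "\<dots> = ennreal (g i) + (\<integral>\<^sup>+I. ennreal (sum_list (map g I)) \<partial>sample_wor f (A - {i}) n)"
      by (subst nn_integral_add) (auto simp: measure_pmf.emeasure_space_1)
    finally show "(\<integral>\<^sup>+I. ennreal (g i + sum_list (map g I)) \<partial>sample_wor f (A - {i}) n)
        = ennreal (g i) + (\<integral>\<^sup>+I. ennreal (sum_list (map g I)) \<partial>sample_wor f (A - {i}) n)" .
  qed
  also have "\<dots> \<le> (\<integral>\<^sup>+i. ennreal (g i) + ennreal (real n * ?S / R) \<partial>weighted_pmf f A)"
    by (intro nn_integral_mono add_left_mono IH)
  also have "\<dots> = (\<integral>\<^sup>+i. ennreal (g i) \<partial>weighted_pmf f A) + ennreal (real n * ?S / R)"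
    by (subst nn_integral_add) (auto simp: measure_pmf.emeasure_space_1)
  also have "(\<integral>\<^sup>+i. ennreal (g i) \<partial>weighted_pmf f A) = (\<Sum>i\<in>A. ennreal (f i / sum f A) * ennreal (g i))"
    by (rule nn_integral_weighted_pmf) (use Suc.prems SA in auto)
  also have "\<dots> = ennreal (\<Sum>i\<in>A. f i / sum f A * g i)"
  proof -
    have "(\<Sum>i\<in>A. ennreal (f i / sum f A) * ennreal (g i)) = (\<Sum>i\<in>A. ennreal (f i / sum f A * g i))"
      by (rule sum.cong) (use Suc.prems SA in \<open>auto simp del: times_divide_eq_left simp: ennreal_mult\<close>)
    also have "\<dots> = ennreal (\<Sum>i\<in>A. f i / sum f A * g i)"
      by (rule sum_ennreal) (use Suc.prems SA in auto)
    finally show ?thesis .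
  qed
  also have "(\<Sum>i\<in>A. f i / sum f A * g i) = ?S / sum f A"
    by (simp add: sum_divide_distrib mult.commute)
  also have "ennreal (?S / sum f A) + ennreal (real n * ?S / R) = ennreal (?S / sum f A + real n * ?S / R)"
    by (rule ennreal_plus[symmetric]) (use S0 SA Suc.prems(4) in auto)
  also have "?S / sum f A + real n * ?S / R \<le> real (Suc n) * ?S / R"
  proof -
    have "?S / sum f A \<le> ?S / R"
      by (rule divide_left_mono) (use S0 RA Suc.prems(4) in auto)
    then show ?thesis by (simp add: field_simps add_divide_distrib)
  qed
  finally show ?case by (simp add: ennreal_leI)
qed

lemma sample_prob_bound:
  fixes f g :: "nat \<Rightarrow> real"
  assumes "finite A" "\<And>i. i \<in> A \<Longrightarrow> 0 \<le> f i" "\<And>i. 0 \<le> g i" "R > 0"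
    "\<And>B. B \<subseteq> A \<Longrightarrow> card A \<le> card B + n \<Longrightarrow> R \<le> sum f B"
    and c: "c > 0"
    and P: "\<And>I. length I = n \<Longrightarrow> \<not> P I \<Longrightarrow> c \<le> sum_list (map g I)"
  shows "measure_pmf.prob (sample_wor f A n) {I. \<not> P I} \<le> real n * (\<Sum>i\<in>A. g i * f i) / R / c"
proof -
  let ?p = "sample_wor f A n"
  let ?E = "real n * (\<Sum>i\<in>A. g i * f i) / R"
  have E0: "0 \<le> ?E" using assms by (auto intro!: sum_nonneg divide_nonneg_nonneg mult_nonneg_nonneg)
  have "measure_pmf.prob ?p {I. \<not> P I} = measure_pmf.prob ?p ({I. \<not> P I} \<inter> set_pmf ?p)"
    by (simp add: measure_Int_set_pmf)
  also have "\<dots> \<le> measure_pmf.prob ?p {I. c \<le> sum_list (map g I)}"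
    by (rule measure_pmf.finite_measure_mono) (use P length_sample_wor in auto)
  also have "{I. c \<le> sum_list (map g I)} = {I\<in>UNIV. 1 \<le> ennreal (1/c) * ennreal (sum_list (map g I))}"
  proof -
    have "c \<le> x \<longleftrightarrow> 1 \<le> ennreal (1/c) * ennreal x" if "0 \<le> x" for x
    proof -
      have "ennreal (1/c) * ennreal x = ennreal (x / c)" using c that by (simp add: ennreal_mult[symmetric])
      moreover have "c \<le> x \<longleftrightarrow> 1 \<le> x / c" using c by (simp add: field_simps)
      ultimately show ?thesis using that c by (metis ennreal_1 ennreal_le_iff divide_nonneg_nonneg less_imp_le)
    qed
    moreover have "\<And>I. 0 \<le> sum_list (map g I)" by (rule sum_list_nonneg) (use assms(3) in auto)
    ultimately show ?thesis by auto
  qed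
  also have "measure_pmf.prob ?p \<dots> \<le> ?E / c"
  proof -
    have "emeasure (measure_pmf ?p) {I\<in>UNIV. 1 \<le> ennreal (1/c) * ennreal (sum_list (map g I))}
        \<le> ennreal (1/c) * (\<integral>\<^sup>+ I. ennreal (sum_list (map g I)) * indicator UNIV I \<partial>measure_pmf ?p)"
      by (rule nn_integral_Markov_inequality) auto
    also have "\<dots> \<le> ennreal (1/c) * ennreal ?E"
      by (intro mult_left_mono) (use sample_bound[OF assms(1-5)] in auto)
    also have "\<dots> = ennreal (?E / c)" using c E0 by (simp add: ennreal_mult[symmetric] mult.commute)
    finally have "ennreal (measure_pmf.prob ?p {I\<in>UNIV. 1 \<le> ennreal (1/c) * ennreal (sum_list (map g I))}) \<le> ennreal (?E / c)"
      by (simp add: measure_pmf.emeasure_eq_measure)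
    then show ?thesis using divide_nonneg_pos[OF E0 c] by (subst (asm) ennreal_le_iff) auto
  qed
  finally show ?thesis .
qed

lemma poisson_sums:
  fixes \<mu> :: real
  shows "(\<lambda>n. \<mu>^n / fact n * exp (-\<mu>)) sums 1"
    and "(\<lambda>n. (real n - \<mu>)^2 * (\<mu>^n / fact n * exp (-\<mu>))) sums \<mu>"
proof -
  define e where "e n = \<mu>^n / fact n" for n
  have e: "e sums exp \<mu>" using exp_converges[of \<mu>] by (simp add: e_def[abs_def] divide_inverse mult.commute)
  have s1: "real (Suc n) * (\<mu>^(Suc n) / fact (Suc n)) = \<mu> * (\<mu>^n / fact n)" for n
  proof -
    have "fact (Suc n) = real (Suc n) * (fact n :: real)" by (rule fact_Suc)
    then show ?thesis by (simp del: of_nat_Suc)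
  qed
  have s2: "real (Suc n) * (real (Suc n) - 1) * (\<mu>^(Suc n) / fact (Suc n)) = \<mu> * (real n * (\<mu>^n / fact n))" for n
  proof -
    have "fact (Suc n) = real (Suc n) * (fact n :: real)" by (rule fact_Suc)
    then show ?thesis by (simp del: of_nat_Suc)
  qed
  have e1: "(\<lambda>n. real n * e n) sums (\<mu> * exp \<mu>)"
  proof -
    have "(\<lambda>n. real (Suc n) * e (Suc n)) = (\<lambda>n. \<mu> * e n)"
      unfolding e_def using s1 by (auto simp: fun_eq_iff simp del: of_nat_Suc)
    moreover have "(\<lambda>n. \<mu> * e n) sums (\<mu> * exp \<mu>)" by (rule sums_mult[OF e])
    ultimately have "(\<lambda>n. real (Suc n) * e (Suc n)) sums (\<mu> * exp \<mu>)" by simp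
    then show ?thesis by (subst (asm) sums_Suc_iff) simp
  qed
  have e2: "(\<lambda>n. real n * (real n - 1) * e n) sums (\<mu>^2 * exp \<mu>)"
  proof -
    have "(\<lambda>n. real (Suc n) * (real (Suc n) - 1) * e (Suc n)) = (\<lambda>n. \<mu> * (real n * e n))"
      unfolding e_def using s2 by (auto simp: fun_eq_iff simp del: of_nat_Suc)
    moreover have "(\<lambda>n. \<mu> * (real n * e n)) sums (\<mu> * (\<mu> * exp \<mu>))" by (rule sums_mult[OF e1])
    ultimately have "(\<lambda>n. real (Suc n) * (real (Suc n) - 1) * e (Suc n)) sums (\<mu> * (\<mu> * exp \<mu>))" by simp
    then show ?thesis by (subst (asm) sums_Suc_iff) (simp add: power2_eq_square mult.assoc)
  qed
  have ex: "exp \<mu> * exp (-\<mu>) = 1" by (simp add: exp_minus)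
  show "(\<lambda>n. \<mu>^n / fact n * exp (-\<mu>)) sums 1"
    using sums_mult2[OF e, of "exp (-\<mu>)"] ex by (simp add: e_def)
  have "(\<lambda>n. (real n * (real n - 1) * e n + real n * e n - 2 * \<mu> * (real n * e n) + \<mu>^2 * e n) * exp (-\<mu>))
      sums ((\<mu>^2 * exp \<mu> + \<mu> * exp \<mu> - 2 * \<mu> * (\<mu> * exp \<mu>) + \<mu>^2 * exp \<mu>) * exp (-\<mu>))"
    by (intro sums_mult2 sums_add sums_diff sums_mult e e1 e2)
  moreover have "(\<mu>^2 * exp \<mu> + \<mu> * exp \<mu> - 2 * \<mu> * (\<mu> * exp \<mu>) + \<mu>^2 * exp \<mu>) * exp (-\<mu>) = \<mu>"
  proof -
    have "(\<mu>^2 * exp \<mu> + \<mu> * exp \<mu> - 2 * \<mu> * (\<mu> * exp \<mu>) + \<mu>^2 * exp \<mu>) * exp (-\<mu>)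
        = \<mu> * (exp \<mu> * exp (-\<mu>))" by (simp add: algebra_simps power2_eq_square)
    then show ?thesis using ex by simp
  qed
  moreover have "(\<lambda>n. (real n * (real n - 1) * e n + real n * e n - 2 * \<mu> * (real n * e n) + \<mu>^2 * e n) * exp (-\<mu>))
      = (\<lambda>n. (real n - \<mu>)^2 * (\<mu>^n / fact n * exp (-\<mu>)))"
    by (auto simp: fun_eq_iff e_def algebra_simps power2_eq_square add_divide_distrib)
  ultimately show "(\<lambda>n. (real n - \<mu>)^2 * (\<mu>^n / fact n * exp (-\<mu>))) sums \<mu>" by simp
qed

locale poisson_rv = prob_space M for M :: "'a measure" +
  fixes X :: "'a \<Rightarrow> nat" and \<mu> :: real
  assumes mu_pos: "0 < \<mu>"
    and law: "\<And>n. measure M {\<omega>\<in>space M. X \<omega> = n} = \<mu>^n / fact n * exp (-\<mu>)"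
begin

lemma pt_sets: "{\<omega>\<in>space M. X \<omega> = n} \<in> sets M"
proof (rule ccontr)
  assume "{\<omega>\<in>space M. X \<omega> = n} \<notin> sets M"
  then have "measure M {\<omega>\<in>space M. X \<omega> = n} = 0" by (rule measure_notin_sets)
  moreover have "\<mu>^n / fact n * exp (-\<mu>) > 0" using mu_pos by simp
  ultimately show False using law[of n] by linarith
qed

lemma fin_sets:
  assumes "finite S"
  shows "{\<omega>\<in>space M. X \<omega> \<in> S} \<in> sets M"
    and "measure M {\<omega>\<in>space M. X \<omega> \<in> S} = (\<Sum>n\<in>S. \<mu>^n / fact n * exp (-\<mu>))"
proof -
  have eq: "{\<omega>\<in>space M. X \<omega> \<in> S} = (\<Union>n\<in>S. {\<omega>\<in>space M. X \<omega> = n})" by auto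
  show "{\<omega>\<in>space M. X \<omega> \<in> S} \<in> sets M" unfolding eq using assms pt_sets by auto
  have "measure M (\<Union>n\<in>S. {\<omega>\<in>space M. X \<omega> = n}) = (\<Sum>n\<in>S. measure M {\<omega>\<in>space M. X \<omega> = n})"
    by (rule measure_finite_Union) (use assms pt_sets in \<open>auto simp: disjoint_family_on_def\<close>)
  then show "measure M {\<omega>\<in>space M. X \<omega> \<in> S} = (\<Sum>n\<in>S. \<mu>^n / fact n * exp (-\<mu>))"
    unfolding eq using law by simp
qed

lemma lt_sets: "{\<omega>\<in>space M. real (X \<omega>) < a} \<in> sets M"
proof -
  have fS: "finite {n. real n < a}"
    by (rule finite_subset[of _ "{..nat \<lceil>a\<rceil>}"]) (auto, linarith)
  show ?thesis using fin_sets(1)[OF fS] by simp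
qed

lemma ge_sets: "{\<omega>\<in>space M. b \<le> real (X \<omega>)} \<in> sets M"
proof -
  have "{\<omega>\<in>space M. b \<le> real (X \<omega>)} = space M - {\<omega>\<in>space M. real (X \<omega>) < b}" by auto
  then show ?thesis using lt_sets by auto
qed

lemma lower_tail:
  assumes "a < \<mu>"
  shows "measure M {\<omega>\<in>space M. real (X \<omega>) < a} \<le> \<mu> / (\<mu> - a)^2"
proof -
  define S where "S = {n. real n < a}"
  have fS: "finite S"
    by (rule finite_subset[of _ "{..nat \<lceil>a\<rceil>}"]) (auto simp: S_def, linarith)
  define p where "p n = \<mu>^n / fact n * exp (-\<mu>)" for n
  define q where "q n = (real n - \<mu>)^2 * p n" for n
  have q: "q sums \<mu>" using poisson_sums(2)[of \<mu>] by (simp add: q_def[abs_def] p_def[abs_def])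
  have "measure M {\<omega>\<in>space M. real (X \<omega>) < a} = measure M {\<omega>\<in>space M. X \<omega> \<in> S}"
    by (simp add: S_def)
  also have "\<dots> = (\<Sum>n\<in>S. p n)" using fin_sets(2)[OF fS] by (simp add: p_def)
  also have "\<dots> \<le> (\<Sum>n\<in>S. q n / (\<mu> - a)^2)"
  proof (rule sum_mono)
    fix n assume "n \<in> S"
    then have "(\<mu> - a)^2 \<le> (\<mu> - real n)^2" using assms unfolding S_def
      by (intro power_mono) auto
    then have "(\<mu> - a)^2 \<le> (real n - \<mu>)^2" by (simp add: power2_commute)
    moreover have "0 \<le> p n" using mu_pos by (simp add: p_def)
    ultimately have "(\<mu> - a)^2 * p n \<le> q n" unfolding q_def by (intro mult_right_mono)
    then show "p n \<le> q n / (\<mu> - a)^2" using assms by (simp add: field_simps)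
  qed
  also have "\<dots> = (\<Sum>n\<in>S. q n) / (\<mu> - a)^2" by (simp add: sum_divide_distrib)
  also have "(\<Sum>n\<in>S. q n) \<le> \<mu>"
  proof -
    have "\<And>n. 0 \<le> q n" using mu_pos by (simp add: q_def p_def)
    then have "(\<Sum>n\<in>S. q n) \<le> suminf q" using sum_le_suminf[OF sums_summable[OF q] fS] by auto
    then show ?thesis using q by (simp add: sums_iff)
  qed
  then have "(\<Sum>n\<in>S. q n) / (\<mu> - a)^2 \<le> \<mu> / (\<mu> - a)^2" by (intro divide_right_mono) auto
  finally show ?thesis .
qed

lemma upper_tail:
  assumes "\<mu> < b"
  shows "measure M {\<omega>\<in>space M. b \<le> real (X \<omega>)} \<le> \<mu> / (b - \<mu>)^2"
proof -
  define S where "S = {n. real n < b}"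
  have fS: "finite S"
    by (rule finite_subset[of _ "{..nat \<lceil>b\<rceil>}"]) (auto simp: S_def, linarith)
  define p where "p n = \<mu>^n / fact n * exp (-\<mu>)" for n
  define q where "q n = (real n - \<mu>)^2 * p n" for n
  have q: "q sums \<mu>" using poisson_sums(2)[of \<mu>] by (simp add: q_def[abs_def] p_def[abs_def])
  have p: "p sums 1" using poisson_sums(1)[of \<mu>] by (simp add: p_def[abs_def])
  have eq: "{\<omega>\<in>space M. b \<le> real (X \<omega>)} = space M - {\<omega>\<in>space M. X \<omega> \<in> S}"
    by (auto simp: S_def)
  have "measure M {\<omega>\<in>space M. b \<le> real (X \<omega>)} = 1 - (\<Sum>n\<in>S. p n)"
    unfolding eq using prob_compl[OF fin_sets(1)[OF fS]] fin_sets(2)[OF fS] by (simp add: p_def)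
  also have "\<dots> \<le> \<mu> / (b - \<mu>)^2"
  proof -
    have s1: "(\<lambda>n. if n \<in> S then p n else 0) sums (\<Sum>n\<in>S. p n)" by (rule sums_If_finite_set[OF fS])
    have s2: "(\<lambda>n. p n - (if n \<in> S then p n else 0)) sums (1 - (\<Sum>n\<in>S. p n))"
      by (rule sums_diff[OF p s1])
    have s3: "(\<lambda>n. q n / (b - \<mu>)^2) sums (\<mu> / (b - \<mu>)^2)" by (rule sums_divide[OF q])
    show ?thesis
    proof (rule sums_le[OF _ s2 s3])
      fix n
      show "p n - (if n \<in> S then p n else 0) \<le> q n / (b - \<mu>)^2"
      proof (cases "n \<in> S")
        case True then show ?thesis using mu_pos by (simp add: q_def p_def divide_nonneg_nonneg)
      next
        case False
        then have "(b - \<mu>)^2 \<le> (real n - \<mu>)^2" using assms unfolding S_def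
          by (intro power_mono) auto
        moreover have "0 \<le> p n" using mu_pos by (simp add: p_def)
        ultimately have "(b - \<mu>)^2 * p n \<le> q n" unfolding q_def by (intro mult_right_mono)
        then show ?thesis using assms False by (simp add: field_simps)
      qed
    qed
  qed
  finally show ?thesis .
qed

end

lemma intensity_atLeast:
  assumes "0 < x"
  shows "ppp_intensity {x..} = ennreal (1 / x)"
proof -
  have "(\<integral>\<^sup>+t. ennreal (1 / t\<^sup>2) * indicator {x ..} t \<partial>lborel) = ennreal (0 - (- 1 / x))"
  proof (rule nn_integral_FTC_atLeast)
    show "(\<lambda>t::real. 1 / t\<^sup>2) \<in> borel_measurable borel" by measurable
    fix t assume "x \<le> t"
    then have "t \<noteq> 0" using assms by auto
    then show "((\<lambda>t. - 1 / t) has_real_derivative 1 / t\<^sup>2) (at t)"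
      by (auto intro!: derivative_eq_intros simp: power2_eq_square)
    show "0 \<le> 1 / t\<^sup>2" by simp
  next
    show "((\<lambda>t::real. - 1 / t) \<longlongrightarrow> 0) at_top" by real_asymp
  qed
  then show ?thesis by (simp add: ppp_intensity_def)
qed

context
  fixes M :: "'a measure" and w :: "'a \<Rightarrow> nat \<Rightarrow> real"
  assumes ppp: "is_ppp_atoms M w"
begin

lemma ppp_prob: "prob_space M" using ppp by (simp add: is_ppp_atoms_def)

lemma ppp_meas[measurable]: "(\<lambda>\<omega>. w \<omega> i) \<in> borel_measurable M" using ppp by (simp add: is_ppp_atoms_def)

lemma ppp_pos: "\<omega> \<in> space M \<Longrightarrow> 1 \<le> i \<Longrightarrow> 0 < w \<omega> i" using ppp by (simp add: is_ppp_atoms_def)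

lemma ppp_dec: "\<omega> \<in> space M \<Longrightarrow> 1 \<le> i \<Longrightarrow> w \<omega> (Suc i) < w \<omega> i" using ppp by (simp add: is_ppp_atoms_def)

lemma ppp_mono:
  assumes "\<omega> \<in> space M" "1 \<le> i" "i \<le> j" shows "w \<omega> j \<le> w \<omega> i"
  using assms(3)
proof (induction j rule: dec_induct)
  case base then show ?case by simp
next
  case (step j) then show ?case using ppp_dec[of \<omega> j] assms by simp
qed

lemma ppp_poisson:
  assumes "0 < x"
  shows "poisson_rv M (\<lambda>\<omega>. atom_count (w \<omega>) {x..}) (1/x)"
    and "AE \<omega> in M. finite {i. 1 \<le> i \<and> w \<omega> i \<in> {x..}}"
proof -
  let ?A = "\<lambda>_::nat. {x..}"
  have int: "ppp_intensity {x..} = ennreal (1/x)" by (rule intensity_atLeast[OF assms])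
  have hyp: "(\<forall>j<1. ?A j \<in> sets borel \<and> ?A j \<subseteq> {0<..} \<and> ppp_intensity (?A j) < \<infinity>) \<and>
        disjoint_family_on ?A {..<1}"
    using assms int by (auto simp: disjoint_family_on_def)
  have C: "(\<forall>j<1. AE \<omega> in M. finite {i. 1 \<le> i \<and> w \<omega> i \<in> ?A j}) \<and>
          prob_space.indep_vars M (\<lambda>_. count_space UNIV)
             (\<lambda>j \<omega>. atom_count (w \<omega>) (?A j)) {..<1} \<and>
          (\<forall>j<1. \<forall>n::nat.
             measure M {\<omega> \<in> space M. atom_count (w \<omega>) (?A j) = n} =
               (let \<mu> = enn2real (ppp_intensity (?A j)) in \<mu> ^ n / fact n * exp (- \<mu>)))"
  proof -
    have F: "\<forall>(k::nat) (A::nat \<Rightarrow> real set).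
        (\<forall>j<k. A j \<in> sets borel \<and> A j \<subseteq> {0<..} \<and> ppp_intensity (A j) < \<infinity>) \<and>
        disjoint_family_on A {..<k} \<longrightarrow>
          (\<forall>j<k. AE \<omega> in M. finite {i. 1 \<le> i \<and> w \<omega> i \<in> A j}) \<and>
          prob_space.indep_vars M (\<lambda>_. count_space UNIV)
             (\<lambda>j \<omega>. atom_count (w \<omega>) (A j)) {..<k} \<and>
          (\<forall>j<k. \<forall>n::nat.
             measure M {\<omega> \<in> space M. atom_count (w \<omega>) (A j) = n} =
               (let \<mu> = enn2real (ppp_intensity (A j)) in \<mu> ^ n / fact n * exp (- \<mu>)))"
      using ppp unfolding is_ppp_atoms_def by (elim conjE) assumption
    show ?thesis using mp[OF F[THEN spec[where x=1], THEN spec[where x="?A"]] hyp] .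
  qed
  show "AE \<omega> in M. finite {i. 1 \<le> i \<and> w \<omega> i \<in> {x..}}" using C by auto
  interpret prob_space M by (rule ppp_prob)
  show "poisson_rv M (\<lambda>\<omega>. atom_count (w \<omega>) {x..}) (1/x)"
  proof
    show "0 < 1/x" using assms by simp
    fix n
    show "measure M {\<omega> \<in> space M. atom_count (w \<omega>) {x..} = n} = (1/x)^n / fact n * exp (- (1/x))"
      using C int assms by (auto simp: Let_def)
  qed
qed

lemma small_w_event:
  assumes "0 < x" "1 \<le> m" "real m < 1/x"
  shows "measure M {\<omega>\<in>space M. w \<omega> m < x} \<le> (1/x) / (1/x - real m)^2"
proof -
  interpret P: poisson_rv M "\<lambda>\<omega>. atom_count (w \<omega>) {x..}" "1/x" by (rule ppp_poisson(1)[OF assms(1)])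
  have "measure M {\<omega>\<in>space M. w \<omega> m < x} \<le> measure M {\<omega>\<in>space M. real (atom_count (w \<omega>) {x..}) < real m}"
  proof (rule P.finite_measure_mono[OF _ P.lt_sets], safe)
    fix \<omega> assume \<omega>: "\<omega> \<in> space M" "w \<omega> m < x"
    have "{i. 1 \<le> i \<and> w \<omega> i \<in> {x..}} \<subseteq> {1..m-1}"
    proof (rule subsetI)
      fix i assume "i \<in> {i. 1 \<le> i \<and> w \<omega> i \<in> {x..}}"
      then have i: "1 \<le> i" "w \<omega> i \<in> {x..}" by auto
      have "i \<le> m - 1"
      proof (rule ccontr)
        assume "\<not> i \<le> m - 1"
        then have "m \<le> i" by simp
        then have "w \<omega> i \<le> w \<omega> m" using ppp_mono[OF \<omega>(1) assms(2)] by simp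
        then show False using i \<omega> by simp
      qed
      then show "i \<in> {1..m-1}" using i by simp
    qed
    then have "atom_count (w \<omega>) {x..} \<le> m - 1"
      unfolding atom_count_def using card_mono[of "{1..m-1}"] by fastforce
    then show "real (atom_count (w \<omega>) {x..}) < real m" using assms(2) by linarith
  qed
  also have "\<dots> \<le> (1/x) / (1/x - real m)^2" by (rule P.lower_tail[OF assms(3)])
  finally show ?thesis .
qed

lemma big_w_event:
  assumes "0 < t" "1 \<le> i" "1/t < real i"
  shows "measure M {\<omega>\<in>space M. t \<le> w \<omega> i} \<le> (1/t) / (real i - 1/t)^2"
proof -
  interpret P: poisson_rv M "\<lambda>\<omega>. atom_count (w \<omega>) {t..}" "1/t" by (rule ppp_poisson(1)[OF assms(1)])
  have "emeasure M {\<omega>\<in>space M. t \<le> w \<omega> i} \<le> emeasure M {\<omega>\<in>space M. real i \<le> real (atom_count (w \<omega>) {t..})}"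
  proof (rule emeasure_mono_AE[OF _ P.ge_sets])
    show "AE \<omega> in M. \<omega> \<in> {\<omega> \<in> space M. t \<le> w \<omega> i} \<longrightarrow>
            \<omega> \<in> {\<omega> \<in> space M. real i \<le> real (atom_count (w \<omega>) {t..})}"
      using ppp_poisson(2)[OF assms(1)]
    proof eventually_elim
      case (elim \<omega>)
      show ?case
      proof safe
        assume \<omega>: "\<omega> \<in> space M" "t \<le> w \<omega> i"
        have "{1..i} \<subseteq> {j. 1 \<le> j \<and> w \<omega> j \<in> {t..}}"
        proof (rule subsetI)
          fix j assume j: "j \<in> {1..i}"
          then have "w \<omega> i \<le> w \<omega> j" using ppp_mono[OF \<omega>(1)] by auto
          then show "j \<in> {j. 1 \<le> j \<and> w \<omega> j \<in> {t..}}" using \<omega> j by simp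
        qed
        then have "card {1..i} \<le> atom_count (w \<omega>) {t..}"
          unfolding atom_count_def by (rule card_mono[OF elim])
        then show "real i \<le> real (atom_count (w \<omega>) {t..})" by simp
      qed
    qed
  qed
  then have "measure M {\<omega>\<in>space M. t \<le> w \<omega> i} \<le> measure M {\<omega>\<in>space M. real i \<le> real (atom_count (w \<omega>) {t..})}"
    by (simp add: P.emeasure_eq_measure)
  also have "\<dots> \<le> (1/t) / (real i - 1/t)^2" by (rule P.upper_tail[OF assms(3)])
  finally show ?thesis .
qed

end

lemma powr_tail_step:
  fixes \<beta> :: real and b :: nat
  assumes "0 < \<beta>" "1 \<le> b"
  shows "real (Suc b) powr (-(1+\<beta>)) \<le> (real b powr (-\<beta>) - real (Suc b) powr (-\<beta>)) / \<beta>"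
proof -
  have "\<exists>z. real b < z \<and> z < real (Suc b) \<and>
      real (Suc b) powr (-\<beta>) - real b powr (-\<beta>) = (real (Suc b) - real b) * (-\<beta> * z powr (-\<beta> - 1))"
  proof (rule MVT2)
    show "real b < real (Suc b)" by simp
    fix x assume "real b \<le> x" "x \<le> real (Suc b)"
    then have "0 < x" using assms by auto
    then show "((\<lambda>x. x powr (-\<beta>)) has_real_derivative -\<beta> * x powr (-\<beta> - 1)) (at x)"
      using has_real_derivative_powr[of x "-\<beta>"] by simp
  qed
  then obtain z where z: "real b < z" "z < real (Suc b)"
    and eq: "real (Suc b) powr (-\<beta>) - real b powr (-\<beta>) = -\<beta> * z powr (-\<beta> - 1)" by auto
  have zpos: "0 < z" using z assms by linarith
  have ex: "-\<beta> - 1 = -(1+\<beta>)" by simp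
  have "real (Suc b) powr (-(1+\<beta>)) \<le> z powr (-(1+\<beta>))"
    by (rule powr_mono2') (use assms z zpos in auto)
  then have "\<beta> * real (Suc b) powr (-(1+\<beta>)) \<le> \<beta> * z powr (-(1+\<beta>))"
    using assms by (intro mult_left_mono) auto
  then have "\<beta> * real (Suc b) powr (-(1+\<beta>)) \<le> real b powr (-\<beta>) - real (Suc b) powr (-\<beta>)"
    using eq unfolding ex by linarith
  then show ?thesis using assms by (simp add: field_simps)
qed

lemma powr_tail:
  fixes \<beta> :: real and a b :: nat
  assumes "0 < \<beta>" "1 \<le> a"
  shows "(\<Sum>i\<in>{a<..b}. real i powr (-(1+\<beta>))) \<le> real a powr (-\<beta>) / \<beta>"
proof (cases "a \<le> b")
  case True
  have "(\<Sum>i\<in>{a<..b}. real i powr (-(1+\<beta>))) \<le> (real a powr (-\<beta>) - real b powr (-\<beta>)) / \<beta>"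
    using True
  proof (induction b rule: dec_induct)
    case base then show ?case by simp
  next
    case (step b)
    have "{a<..Suc b} = insert (Suc b) {a<..b}" using step by auto
    then have "(\<Sum>i\<in>{a<..Suc b}. real i powr (-(1+\<beta>))) = real (Suc b) powr (-(1+\<beta>)) + (\<Sum>i\<in>{a<..b}. real i powr (-(1+\<beta>)))"
      by simp
    also have "\<dots> \<le> (real b powr (-\<beta>) - real (Suc b) powr (-\<beta>)) / \<beta> + (real a powr (-\<beta>) - real b powr (-\<beta>)) / \<beta>"
      using powr_tail_step[OF assms(1), of b] step assms by (intro add_mono) auto
    also have "\<dots> = (real a powr (-\<beta>) - real (Suc b) powr (-\<beta>)) / \<beta>" unfolding diff_divide_distrib by simp
    finally show ?case .
  qed
  also have "\<dots> \<le> real a powr (-\<beta>) / \<beta>" using assms by (intro divide_right_mono) auto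
  finally show ?thesis .
next
  case False then show ?thesis using assms by simp
qed

lemma geom_bound:
  fixes K :: real and D :: "nat set"
  assumes "finite D" "0 < K" "\<And>k. k \<in> D \<Longrightarrow> K < 2^(k+1)"
  shows "(\<Sum>k\<in>D. 2 / 2^k) \<le> 8 / K"
proof (cases "D = {}")
  case True then show ?thesis using assms by simp
next
  case False
  define k0 where "k0 = Min D"
  have k0D: "k0 \<in> D" using False assms(1) by (simp add: k0_def)
  have k0le: "\<And>k. k \<in> D \<Longrightarrow> k0 \<le> k" using assms(1) by (simp add: k0_def)
  have "(\<Sum>k\<in>D. 2 / 2^k) = (\<Sum>k\<in>D. 2 * (1/2)^k0 * (1/2::real)^(k - k0))"
  proof (rule sum.cong)
    fix k assume "k \<in> D"
    then have "k = k0 + (k - k0)" using k0le by simp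
    then have "(1/2::real)^k = (1/2)^k0 * (1/2)^(k - k0)" by (metis power_add)
    then show "2 / 2^k = 2 * (1/2)^k0 * (1/2::real)^(k - k0)" by (simp add: power_divide)
  qed simp
  also have "\<dots> = 2 * (1/2)^k0 * (\<Sum>k\<in>D. (1/2::real)^(k - k0))" by (simp add: sum_distrib_left)
  also have "(\<Sum>k\<in>D. (1/2::real)^(k - k0)) = (\<Sum>j\<in>(\<lambda>k. k - k0) ` D. (1/2::real)^j)"
  proof (subst sum.reindex)
    show "inj_on (\<lambda>k. k - k0) D"
    proof (rule inj_onI)
      fix x y assume "x \<in> D" "y \<in> D" "x - k0 = y - k0"
      then show "x = y" using k0le[of x] k0le[of y] by arith
    qed
  qed simp
  also have "\<dots> \<le> (\<Sum>j. (1/2::real)^j)"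
    by (rule sum_le_suminf) (use assms(1) in auto)
  also have "(\<Sum>j. (1/2::real)^j) = 2" by (simp add: suminf_geometric)
  also have "2 * (1/2::real)^k0 * 2 = 8 / 2^(k0+1)" by (simp add: power_divide)
  also have "\<dots> \<le> 8 / K" using assms(3)[OF k0D] assms(2) by (intro divide_left_mono) auto
  finally show ?thesis by simp
qed

context
  fixes M :: "'a measure" and w :: "'a \<Rightarrow> nat \<Rightarrow> real"
  assumes ppp: "is_ppp_atoms M w"
begin

lemma pointwise_bound:
  fixes \<beta> chi \<epsilon> K x :: real and N Mn m a :: nat
  assumes om: "\<omega> \<in> space M" and b: "0 < \<beta>" and x: "0 < x" and Nm: "N < m" "m \<le> Mn"
    and wm: "x \<le> w \<omega> m"
    and K: "K = real N powr (chi+\<epsilon>)" and a: "1 \<le> a" "real a \<le> K"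
    and dy: "\<And>k. 2^k \<le> Mn \<Longrightarrow> K < 2^(k+1) \<Longrightarrow> w \<omega> (2^k) < 2/2^k"
    and N1: "1 \<le> N"
  shows "measure_pmf.prob (sample_wor (\<lambda>i. w \<omega> i powr \<beta>) {1..Mn} N) {I. \<not> B_event \<beta> chi \<epsilon> N (w \<omega>) I}
      \<le> real N * (4 powr (1+\<beta>) * real a powr (-\<beta>) / \<beta>) / (real (m - N) * x powr \<beta>) / real N powr (-\<epsilon>*\<beta>/2)"
proof -
  define f where "f i = w \<omega> i powr \<beta>" for i
  define g where "g i = max 0 (w \<omega> i * (if real i > K then 1 else 0))" for i
  define R where "R = real (m - N) * x powr \<beta>"
  define c where "c = real N powr (-\<epsilon>*\<beta>/2)"
  define A where "A = {1..Mn}"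
  have c: "0 < c" using N1 by (simp add: c_def)
  have R: "0 < R" using Nm x by (simp add: R_def)
  have g0: "\<And>i. 0 \<le> g i" by (simp add: g_def)
  have f0: "\<And>i. 0 \<le> f i" by (simp add: f_def)
  have propB: "R \<le> sum f B" if B: "B \<subseteq> A" "card A \<le> card B + N" for B
  proof -
    define C where "C = B \<inter> {1..m}"
    have fA: "finite A" by (simp add: A_def)
    have "{1..m} - B \<subseteq> A - B" using Nm by (auto simp: A_def)
    then have "card ({1..m} - B) \<le> card (A - B)" using fA by (intro card_mono) auto
    also have "card (A - B) = card A - card B" using B fA by (intro card_Diff_subset) (auto intro: finite_subset)
    finally have c1: "card ({1..m} - B) \<le> N" using B by linarith
    have "{1..m} = C \<union> ({1..m} - B)" by (auto simp: C_def)
    then have "card {1..m} \<le> card C + card ({1..m} - B)" by (metis card_Un_le)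
    then have cC: "m - N \<le> card C" using c1 by simp
    have "R = real (m - N) * x powr \<beta>" by (simp add: R_def)
    also have "\<dots> \<le> real (card C) * x powr \<beta>" using cC by (intro mult_right_mono) auto
    also have "\<dots> = (\<Sum>j\<in>C. x powr \<beta>)" by simp
    also have "\<dots> \<le> (\<Sum>j\<in>C. f j)"
    proof (rule sum_mono)
      fix j assume "j \<in> C"
      then have j: "1 \<le> j" "j \<le> m" by (auto simp: C_def)
      have "w \<omega> m \<le> w \<omega> j" by (rule ppp_mono[OF ppp om j])
      then have "x \<le> w \<omega> j" using wm by simp
      then show "x powr \<beta> \<le> f j" unfolding f_def using x b by (intro powr_mono2) auto
    qed
    also have "\<dots> \<le> sum f B"
      by (rule sum_mono2) (use B fA f0 in \<open>auto simp: C_def intro: finite_subset\<close>)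
    finally show ?thesis .
  qed
  have P: "c \<le> sum_list (map g I)" if len: "length I = N" and nB: "\<not> B_event \<beta> chi \<epsilon> N (w \<omega>) I" for I
  proof -
    have "c \<le> (\<Sum>k<N. w \<omega> (I ! k) * (if real (I ! k) > real N powr (chi + \<epsilon>) then 1 else 0))"
      using nB by (simp add: B_event_def c_def not_less)
    also have "\<dots> \<le> (\<Sum>k<N. g (I ! k))"
      by (rule sum_mono) (simp add: g_def K)
    also have "\<dots> = sum_list (map g I)"
      using len by (simp add: sum_list_sum_nth atLeast0LessThan)
    finally show ?thesis .
  qed
  have main: "measure_pmf.prob (sample_wor f A N) {I. \<not> B_event \<beta> chi \<epsilon> N (w \<omega>) I}
      \<le> real N * (\<Sum>i\<in>A. g i * f i) / R / c"
    by (rule sample_prob_bound[OF _ _ g0 R propB c P]) (auto simp: A_def f0)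
  have wi: "w \<omega> i < 4 / real i" if i: "i \<in> A" "K < real i" for i
  proof -
    have i1: "1 \<le> i" using i by (simp add: A_def)
    obtain k where k: "2^k \<le> i" "i < 2^(k+1)" using ex_power_ivl1[of 2 i] i1 by auto
    have "2^k \<le> Mn" using k i by (simp add: A_def)
    moreover have "K < 2^(k+1)"
    proof -
      have "real i < real (2^(k+1))" using k(2) by (simp only: of_nat_less_iff)
      then show ?thesis using i(2) by simp
    qed
    ultimately have "w \<omega> (2^k) < 2/2^k" by (rule dy)
    moreover have "w \<omega> i \<le> w \<omega> (2^k)" by (rule ppp_mono[OF ppp om]) (use k in auto)
    moreover have "(2::real)/2^k \<le> 4 / real i"
    proof -
      have "real i < real (2^(k+1))" using k(2) by (simp only: of_nat_less_iff)
      then have "real i \<le> 2 * 2^k" by simp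
      then show ?thesis using i1 by (simp add: field_simps)
    qed
    ultimately show ?thesis by linarith
  qed
  have gf: "g i * f i \<le> (if a < i then 4 powr (1+\<beta>) * real i powr (-(1+\<beta>)) else 0)" if iA: "i \<in> A" for i
  proof (cases "K < real i")
    case True
    have i1: "1 \<le> i" using iA by (simp add: A_def)
    have wpos: "0 < w \<omega> i" by (rule ppp_pos[OF ppp om i1])
    have ai: "a < i" using True a by linarith
    have "g i * f i = w \<omega> i powr (1+\<beta>)"
      using True wpos by (simp add: g_def f_def powr_add)
    also have "\<dots> \<le> (4 / real i) powr (1+\<beta>)"
      using wi[OF iA True] wpos b by (intro powr_mono2) auto
    also have "\<dots> = 4 powr (1+\<beta>) / real i powr (1+\<beta>)"
      by (simp add: powr_divide)
    also have "\<dots> = 4 powr (1+\<beta>) * real i powr (-(1+\<beta>))"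
      by (simp only: powr_minus divide_inverse)
    finally show ?thesis using ai by simp
  next
    case False
    then show ?thesis by (simp add: g_def)
  qed
  have sumb: "(\<Sum>i\<in>A. g i * f i) \<le> 4 powr (1+\<beta>) * real a powr (-\<beta>) / \<beta>"
  proof -
    have "(\<Sum>i\<in>A. g i * f i) \<le> (\<Sum>i\<in>A. if a < i then 4 powr (1+\<beta>) * real i powr (-(1+\<beta>)) else 0)"
      by (rule sum_mono) (rule gf)
    also have "\<dots> = (\<Sum>i\<in>{i\<in>A. a < i}. 4 powr (1+\<beta>) * real i powr (-(1+\<beta>)))"
      by (rule sum.inter_filter[symmetric]) (simp add: A_def)
    also have "{i\<in>A. a < i} = {a<..Mn}" using a by (auto simp: A_def)
    also have "(\<Sum>i\<in>{a<..Mn}. 4 powr (1+\<beta>) * real i powr (-(1+\<beta>))) = 4 powr (1+\<beta>) * (\<Sum>i\<in>{a<..Mn}. real i powr (-(1+\<beta>)))"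
      by (simp add: sum_distrib_left)
    also have "\<dots> \<le> 4 powr (1+\<beta>) * (real a powr (-\<beta>) / \<beta>)"
      by (intro mult_left_mono powr_tail b a) auto
    finally show ?thesis by simp
  qed
  have "real N * (\<Sum>i\<in>A. g i * f i) / R / c \<le> real N * (4 powr (1+\<beta>) * real a powr (-\<beta>) / \<beta>) / R / c"
    using R c sumb by (intro divide_right_mono mult_left_mono) auto
  then show ?thesis using main by (simp add: R_def c_def f_def[abs_def] A_def)
qed

lemma integral_bound:
  fixes \<beta> chi \<epsilon> :: real and N Mn :: nat
  assumes b: "0 < \<beta>" and N1: "1 \<le> N" and Nm: "N < Mn div 4" and K2: "2 \<le> real N powr (chi+\<epsilon>)"
  shows "(\<integral>\<omega>. measure_pmf.prob (sample_wor (\<lambda>i. w \<omega> i powr \<beta>) {1..Mn} N) {I. \<not> B_event \<beta> chi \<epsilon> N (w \<omega>) I} \<partial>M)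
      \<le> real N * (4 powr (1+\<beta>) * real (nat \<lfloor>real N powr (chi+\<epsilon>)\<rfloor>) powr (-\<beta>) / \<beta>)
           / (real (Mn div 4 - N) * (2 / real Mn) powr \<beta>) / real N powr (-\<epsilon>*\<beta>/2)
        + 8 / real Mn + 8 / real N powr (chi+\<epsilon>)"
proof -
  interpret prob_space M by (rule ppp_prob[OF ppp])
  have wmeas[measurable]: "\<And>i. (\<lambda>\<omega>. w \<omega> i) \<in> borel_measurable M" by (rule ppp_meas[OF ppp])
  define K where "K = real N powr (chi+\<epsilon>)"
  define a where "a = nat \<lfloor>K\<rfloor>"
  define m where "m = Mn div 4"
  define x where "x = 2 / real Mn"
  define p where "p \<omega> = measure_pmf.prob (sample_wor (\<lambda>i. w \<omega> i powr \<beta>) {1..Mn} N) {I. \<not> B_event \<beta> chi \<epsilon> N (w \<omega>) I}" for \<omega>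
  define bN where "bN = real N * (4 powr (1+\<beta>) * real a powr (-\<beta>) / \<beta>) / (real (m - N) * x powr \<beta>) / real N powr (-\<epsilon>*\<beta>/2)"
  define D where "D = {k. 2^k \<le> Mn \<and> K < 2^(k+1)}"
  define Bad where "Bad = {\<omega>\<in>space M. w \<omega> m < x} \<union> (\<Union>k\<in>D. {\<omega>\<in>space M. 2/2^k \<le> w \<omega> (2^k)})"
  have Mn0: "0 < Mn" using Nm by auto
  have x0: "0 < x" using Mn0 by (simp add: x_def)
  have m1: "1 \<le> m" "N < m" "m \<le> Mn" using Nm N1 by (auto simp: m_def)
  have K0: "2 \<le> K" using K2 by (simp add: K_def)
  have a1: "1 \<le> a" "real a \<le> K" using K0 by (auto simp: a_def le_nat_iff)
  have fD: "finite D"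
  proof (rule finite_subset[of _ "{..Mn}"])
    show "D \<subseteq> {..Mn}"
    proof
      fix k assume "k \<in> D"
      then have "2^k \<le> Mn" by (simp add: D_def)
      moreover have "k < 2^k" by (rule less_exp)
      ultimately show "k \<in> {..Mn}" unfolding atMost_iff by linarith
    qed
  qed simp
  have Bad_sets: "Bad \<in> sets M" unfolding Bad_def using fD by measurable
  have bN0: "0 \<le> bN" using b m1 x0 by (auto simp: bN_def intro!: divide_nonneg_nonneg mult_nonneg_nonneg)
  have p0: "\<And>\<omega>. 0 \<le> p \<omega>" by (simp add: p_def)
  have pt: "p \<omega> \<le> bN + indicator Bad \<omega>" if om: "\<omega> \<in> space M" for \<omega>
  proof (cases "\<omega> \<in> Bad")
    case True
    have "p \<omega> \<le> 1" by (simp add: p_def)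
    then show ?thesis using True bN0 by simp
  next
    case False
    have wm: "x \<le> w \<omega> m" using False om by (auto simp: Bad_def not_less)
    have dy: "w \<omega> (2^k) < 2/2^k" if "2^k \<le> Mn" "K < 2^(k+1)" for k
    proof -
      have "k \<in> D" using that by (simp add: D_def)
      then show ?thesis using False om by (auto simp: Bad_def not_le)
    qed
    have "p \<omega> \<le> bN" unfolding p_def bN_def
      by (rule pointwise_bound[OF om b x0 m1(2,3) wm K_def a1 dy N1])
    then show ?thesis using False by simp
  qed
  have mBad: "measure M Bad \<le> 8 / real Mn + 8 / K"
  proof -
    have "measure M Bad \<le> measure M {\<omega>\<in>space M. w \<omega> m < x} + measure M (\<Union>k\<in>D. {\<omega>\<in>space M. 2/2^k \<le> w \<omega> (2^k)})"
      unfolding Bad_def by (rule measure_Un_le) (use fD in measurable)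
    also have "measure M (\<Union>k\<in>D. {\<omega>\<in>space M. 2/2^k \<le> w \<omega> (2^k)}) \<le> (\<Sum>k\<in>D. measure M {\<omega>\<in>space M. 2/2^k \<le> w \<omega> (2^k)})"
      by (rule measure_UNION_le[OF fD]) measurable
    also have "\<dots> \<le> (\<Sum>k\<in>D. 2 / 2^k)"
    proof (rule sum_mono)
      fix k assume "k \<in> D"
      have "measure M {\<omega>\<in>space M. 2/2^k \<le> w \<omega> (2^k)} \<le> (1/(2/2^k)) / (real (2^k) - 1/(2/2^k))^2"
        by (rule big_w_event[OF ppp]) auto
      also have "\<dots> = 2 / 2^k" by (simp add: field_simps power2_eq_square)
      finally show "measure M {\<omega>\<in>space M. 2/2^k \<le> w \<omega> (2^k)} \<le> 2 / 2^k" .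
    qed
    also have "\<dots> \<le> 8 / K" by (rule geom_bound[OF fD]) (use K0 in \<open>auto simp: D_def\<close>)
    also have "measure M {\<omega>\<in>space M. w \<omega> m < x} \<le> (1/x) / (1/x - real m)^2"
    proof (rule small_w_event[OF ppp x0 m1(1)])
      show "real m < 1/x" using Mn0 by (simp add: x_def m_def)
    qed
    also have "(1/x) / (1/x - real m)^2 \<le> 8 / real Mn"
    proof -
      have h1: "real m \<le> real Mn / 4" by (simp add: m_def)
      have "real Mn / 4 \<le> 1/x - real m" using h1 by (simp add: x_def)
      then have "(real Mn / 4)^2 \<le> (1/x - real m)^2" using Mn0 by (intro power_mono) auto
      then have "(1/x) / (1/x - real m)^2 \<le> (1/x) / (real Mn / 4)^2"
      proof (rule divide_left_mono)
        have "0 < (real Mn / 4)^2" using Mn0 by simp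
        then show "0 < (1/x - real m)^2 * (real Mn / 4)^2"
          using \<open>(real Mn / 4)^2 \<le> (1/x - real m)^2\<close> by (intro mult_pos_pos) auto
      qed (use x0 \<open>(real Mn / 4)^2 \<le> (1/x - real m)^2\<close> in auto)
      also have "\<dots> = 8 / real Mn" using Mn0 by (simp add: x_def field_simps power2_eq_square)
      finally show ?thesis .
    qed
    finally show ?thesis by simp
  qed
  show ?thesis
  proof (cases "integrable M p")
    case True
    have "(\<integral>\<omega>. p \<omega> \<partial>M) \<le> (\<integral>\<omega>. bN + indicator Bad \<omega> \<partial>M)"
    proof (rule integral_mono[OF True])
      show "integrable M (\<lambda>\<omega>. bN + indicator Bad \<omega>)"
        by (intro Bochner_Integration.integrable_add integrable_const integrable_real_indicator Bad_sets) (simp add: emeasure_eq_measure)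
    qed (use pt in auto)
    also have "\<dots> = bN + measure M Bad"
    proof -
      have i2: "integrable M (\<lambda>\<omega>. indicator Bad \<omega> :: real)"
        by (intro integrable_real_indicator Bad_sets) (simp add: emeasure_eq_measure)
      have "(\<integral>\<omega>. bN + indicator Bad \<omega> \<partial>M) = (\<integral>\<omega>. bN \<partial>M) + (\<integral>\<omega>. indicator Bad \<omega> \<partial>M)"
        by (rule Bochner_Integration.integral_add[OF _ i2]) simp
      also have "\<dots> = bN + measure M Bad" using Bad_sets by (simp add: prob_space)
      finally show ?thesis .
    qed
    also have "\<dots> \<le> bN + 8 / real Mn + 8 / K" using mBad by simp
    finally show ?thesis by (simp add: p_def bN_def K_def a_def m_def x_def)
  next
    case False
    then have "(\<integral>\<omega>. p \<omega> \<partial>M) = 0" by (rule not_integrable_integral_eq)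
    moreover have "0 \<le> bN + 8 / real Mn + 8 / K" using bN0 K0 by simp
    ultimately show ?thesis by (simp add: p_def bN_def K_def a_def m_def x_def)
  qed
qed

end

lemma T1_identity:
  fixes n \<beta> \<gamma> \<epsilon> \<chi>' :: real
  assumes n: "n > 0" and b: "\<beta> > 0" and chi: "\<chi>' = (1 - \<gamma> * (1 - \<beta>)) / \<beta>"
  shows "n * (4 powr (1+\<beta>) * (n powr (\<chi>'+\<epsilon>)/2) powr (-\<beta>) / \<beta>) / ((n powr \<gamma> / 8) * (1 / n powr \<gamma>) powr \<beta>) / n powr (-\<epsilon>*\<beta>/2)
   = (4 powr (1+\<beta>) * 2 powr \<beta> * 8 / \<beta>) * n powr (-\<epsilon>*\<beta>/2)"
proof -
  define E where "E = 1 - \<gamma> + \<gamma>*\<beta> + \<epsilon>*\<beta>"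
  have e: "(\<chi>'+\<epsilon>) * \<beta> = E" using b by (simp add: chi E_def field_simps)
  have 1: "(n powr (\<chi>'+\<epsilon>)/2) powr (-\<beta>) = 2 powr \<beta> * n powr (-E)"
  proof -
    have e': "(\<chi>'+\<epsilon>) * (-\<beta>) = -E" using e by simp
    have "(n powr (\<chi>'+\<epsilon>)/2) powr (-\<beta>) = (n powr (\<chi>'+\<epsilon>)) powr (-\<beta>) / 2 powr (-\<beta>)"
      by (simp add: powr_divide)
    also have "(n powr (\<chi>'+\<epsilon>)) powr (-\<beta>) = n powr (-E)" by (simp only: powr_powr e')
    also have "n powr (-E) / 2 powr (-\<beta>) = 2 powr \<beta> * n powr (-E)" by (simp add: powr_minus divide_inverse)
    finally show ?thesis .
  qed
  have 2: "(1 / n powr \<gamma>) powr \<beta> = n powr (-(\<gamma>*\<beta>))"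
  proof -
    have "(1 / n powr \<gamma>) powr \<beta> = 1 powr \<beta> / (n powr \<gamma>) powr \<beta>" by (simp add: powr_divide)
    also have "\<dots> = 1 / n powr (\<gamma>*\<beta>)" by (simp add: powr_powr)
    also have "\<dots> = n powr (-(\<gamma>*\<beta>))" by (simp add: powr_minus divide_inverse)
    finally show ?thesis .
  qed
  have key: "n powr 1 * n powr (-E) / (n powr \<gamma> * n powr (-(\<gamma>*\<beta>))) / n powr (-\<epsilon>*\<beta>/2) = n powr (-\<epsilon>*\<beta>/2)"
  proof -
    have "n powr 1 * n powr (-E) / (n powr \<gamma> * n powr (-(\<gamma>*\<beta>))) / n powr (-\<epsilon>*\<beta>/2)
        = n powr (1 + -E - (\<gamma> + -(\<gamma>*\<beta>)) - (-\<epsilon>*\<beta>/2))"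
      by (simp only: powr_add[symmetric] powr_diff[symmetric])
    also have "1 + -E - (\<gamma> + -(\<gamma>*\<beta>)) - (-\<epsilon>*\<beta>/2) = -\<epsilon>*\<beta>/2" by (simp add: E_def)
    finally show ?thesis .
  qed
  have "n * (4 powr (1+\<beta>) * (n powr (\<chi>'+\<epsilon>)/2) powr (-\<beta>) / \<beta>) / ((n powr \<gamma> / 8) * (1 / n powr \<gamma>) powr \<beta>) / n powr (-\<epsilon>*\<beta>/2)
     = (4 powr (1+\<beta>) * 2 powr \<beta> * 8 / \<beta>) * (n powr 1 * n powr (-E) / (n powr \<gamma> * n powr (-(\<gamma>*\<beta>))) / n powr (-\<epsilon>*\<beta>/2))"
    unfolding 1 2 using n b by (simp add: field_simps)
  then show ?thesis unfolding key .
qed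

lemma lim_aux:
  fixes C e g d :: real
  assumes "0 < e" "0 < g" "0 < d"
  shows "((\<lambda>x. ln x * (C * x powr (-e) + 8 / x powr g + 8 / x powr d)) \<longlongrightarrow> 0) at_top"
proof -
  have 1: "((\<lambda>x. ln x * (C * x powr (-e))) \<longlongrightarrow> 0) at_top" using assms by real_asymp
  have 2: "((\<lambda>x. ln x * (8 / x powr g)) \<longlongrightarrow> 0) at_top" using assms by real_asymp
  have 3: "((\<lambda>x. ln x * (8 / x powr d)) \<longlongrightarrow> 0) at_top" using assms by real_asymp
  have "((\<lambda>x. ln x * (C * x powr (-e)) + ln x * (8 / x powr g) + ln x * (8 / x powr d)) \<longlongrightarrow> 0 + 0 + 0) at_top"
    by (intro tendsto_add 1 2 3)
  then show ?thesis by (simp add: distrib_left)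
qed

lemma ev_aux1:
  fixes g :: real assumes "1 < g"
  shows "eventually (\<lambda>x. 0 \<le> x powr g / 8 - 3/4 - x) at_top"
  using assms by real_asymp

lemma ev_aux2:
  fixes d :: real assumes "0 < d"
  shows "eventually (\<lambda>x. 2 \<le> x powr d) at_top"
  using assms by real_asymp

theorem proposition6p3:
  fixes M :: "'a measure" and w :: "'a \<Rightarrow> nat \<Rightarrow> real"
    and \<gamma> \<beta> \<epsilon> :: real
  assumes "\<gamma> > 1" and "0 < \<beta>" and "\<beta> < 1"
    and "1 - 1 / \<gamma> < \<beta>"
    and "0 < \<epsilon>" and "\<epsilon> < 1"
    and "is_ppp_atoms M w"
  shows "((\<lambda>N::nat. ln (real N) *
            (\<integral>\<omega>. measure_pmf.prob
                    (sample_wor (\<lambda>i. w \<omega> i powr \<beta>) {1..nat \<lceil>real N powr \<gamma>\<rceil>} N)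
                    {I. \<not> B_event \<beta> ((1 - \<gamma> * (1 - \<beta>)) / \<beta>) \<epsilon> N (w \<omega>) I} \<partial>M))
          \<longlongrightarrow> 0) sequentially"
proof -
  note ppp = assms(7)
  note b = assms(2)
  interpret prob_space M by (rule ppp_prob[OF ppp])
  define chi where "chi = (1 - \<gamma> * (1 - \<beta>)) / \<beta>"
  define d where "d = chi + \<epsilon>"
  have g0: "0 < \<gamma>" using assms(1) by simp
  have "\<gamma> * (1 - \<beta>) < 1"
  proof -
    have "1 - \<beta> < 1 / \<gamma>" using assms(4) by linarith
    then have "\<gamma> * (1 - \<beta>) < \<gamma> * (1 / \<gamma>)" using g0 by (intro mult_strict_left_mono)
    then show ?thesis using g0 by simp
  qed
  then have chi0: "0 < chi" unfolding chi_def using b by (intro divide_pos_pos) auto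
  have d0: "0 < d" using chi0 assms(5) by (simp add: d_def)
  define Q where "Q N = (\<integral>\<omega>. measure_pmf.prob
                    (sample_wor (\<lambda>i. w \<omega> i powr \<beta>) {1..nat \<lceil>real N powr \<gamma>\<rceil>} N)
                    {I. \<not> B_event \<beta> chi \<epsilon> N (w \<omega>) I} \<partial>M)" for N :: nat
  define C where "C = 4 powr (1+\<beta>) * 2 powr \<beta> * 8 / \<beta>"
  define U where "U x = ln x * (C * x powr (-(\<epsilon>*\<beta>/2)) + 8 / x powr \<gamma> + 8 / x powr d)" for x :: real
  have limU: "(U \<longlongrightarrow> 0) at_top" unfolding U_def
    by (rule lim_aux) (use assms(5) b g0 d0 in auto)
  have limUN: "((\<lambda>N::nat. U (real N)) \<longlongrightarrow> 0) sequentially"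
    by (rule filterlim_compose[OF limU filterlim_real_sequentially])
  have ev: "eventually (\<lambda>N::nat. 1 \<le> N \<and> 0 \<le> real N powr \<gamma> / 8 - 3/4 - real N \<and> 2 \<le> real N powr d) sequentially"
  proof -
    have "eventually (\<lambda>x::real. 1 \<le> x \<and> 0 \<le> x powr \<gamma> / 8 - 3/4 - x \<and> 2 \<le> x powr d) at_top"
      using eventually_ge_at_top[of "1::real"] ev_aux1[OF assms(1)] ev_aux2[OF d0]
      by eventually_elim auto
    from eventually_compose_filterlim[OF this filterlim_real_sequentially]
    show ?thesis by simp
  qed
  have bnd: "0 \<le> ln (real N) * Q N \<and> ln (real N) * Q N \<le> U (real N)"
    if N1: "1 \<le> N" and h2: "0 \<le> real N powr \<gamma> / 8 - 3/4 - real N" and h3: "2 \<le> real N powr d" for N :: nat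
  proof -
    define n where "n = real N"
    have n1: "1 \<le> n" using N1 by (simp add: n_def)
    have ln0: "0 \<le> ln n" using n1 by simp
    have Q0: "0 \<le> Q N" unfolding Q_def by (rule Bochner_Integration.integral_nonneg) simp
    define Mn where "Mn = nat \<lceil>n powr \<gamma>\<rceil>"
    have ng1: "1 \<le> n powr \<gamma>" using n1 g0 by (intro ge_one_powr_ge_zero) auto
    have rMn: "n powr \<gamma> \<le> real Mn" "real Mn \<le> n powr \<gamma> + 1"
    proof -
      have "real Mn = real_of_int \<lceil>n powr \<gamma>\<rceil>" unfolding Mn_def using ng1 by (intro of_nat_nat) linarith
      then show "n powr \<gamma> \<le> real Mn" "real Mn \<le> n powr \<gamma> + 1" by linarith+
    qed
    define m where "m = Mn div 4"
    have "Mn \<le> 4 * m + 3" unfolding m_def by linarith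
    then have rm: "real m \<ge> (n powr \<gamma> - 3) / 4" using rMn by simp
    have Nm: "N < Mn div 4" and mN: "real (m - N) \<ge> n powr \<gamma> / 8"
    proof -
      have "real m - n \<ge> n powr \<gamma> / 8" using rm h2 by (simp add: n_def)
      moreover have "0 < n powr \<gamma> / 8" using ng1 by linarith
      ultimately have "real N < real m" unfolding n_def by linarith
      then have "N < m" by simp
      then show "N < Mn div 4" by (simp add: m_def)
      show "real (m - N) \<ge> n powr \<gamma> / 8" using \<open>N < m\<close> \<open>real m - n \<ge> n powr \<gamma> / 8\<close> by (simp add: n_def of_nat_diff)
    qed
    define K where "K = n powr (chi + \<epsilon>)"
    have K2: "2 \<le> K" using h3 by (simp add: K_def d_def n_def)
    note IB = integral_bound[OF ppp b N1 Nm K2[unfolded K_def n_def]]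
    define a where "a = nat \<lfloor>K\<rfloor>"
    have ra: "K / 2 \<le> real a"
    proof -
      have "real a = real_of_int \<lfloor>K\<rfloor>" unfolding a_def using K2 by (intro of_nat_nat) linarith
      then show ?thesis using K2 by linarith
    qed
    have T1: "n * (4 powr (1+\<beta>) * real a powr (-\<beta>) / \<beta>) / (real (m - N) * (2 / real Mn) powr \<beta>) / n powr (-\<epsilon>*\<beta>/2)
        \<le> C * n powr (-\<epsilon>*\<beta>/2)"
    proof -
      have X: "4 powr (1+\<beta>) * real a powr (-\<beta>) / \<beta> \<le> 4 powr (1+\<beta>) * (K/2) powr (-\<beta>) / \<beta>"
      proof -
        have "real a powr (-\<beta>) \<le> (K/2) powr (-\<beta>)" using ra K2 b by (intro powr_mono2') auto
        then show ?thesis using b by (intro divide_right_mono mult_left_mono) auto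
      qed
      have Y: "(n powr \<gamma> / 8) * (1 / n powr \<gamma>) powr \<beta> \<le> real (m - N) * (2 / real Mn) powr \<beta>"
      proof (rule mult_mono)
        show "n powr \<gamma> / 8 \<le> real (m - N)" by (rule mN)
        have Mle: "real Mn \<le> 2 * n powr \<gamma>" "0 < real Mn" using rMn ng1 by linarith+
        have "1 / n powr \<gamma> = 2 / (2 * n powr \<gamma>)" by simp
        also have "\<dots> \<le> 2 / real Mn" by (rule divide_left_mono) (use Mle ng1 in \<open>auto intro!: mult_pos_pos\<close>)
        finally have "1 / n powr \<gamma> \<le> 2 / real Mn" .
        then show "(1 / n powr \<gamma>) powr \<beta> \<le> (2 / real Mn) powr \<beta>" using b ng1 by (intro powr_mono2) auto
      qed auto
      have Y0: "0 < (n powr \<gamma> / 8) * (1 / n powr \<gamma>) powr \<beta>" using ng1 by (intro mult_pos_pos divide_pos_pos) auto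
      have c0: "0 < n powr (-\<epsilon>*\<beta>/2)" using n1 by simp
      have "n * (4 powr (1+\<beta>) * real a powr (-\<beta>) / \<beta>) / (real (m - N) * (2 / real Mn) powr \<beta>)
          \<le> n * (4 powr (1+\<beta>) * (K/2) powr (-\<beta>) / \<beta>) / ((n powr \<gamma> / 8) * (1 / n powr \<gamma>) powr \<beta>)"
      proof (rule frac_le)
        show "n * (4 powr (1+\<beta>) * real a powr (-\<beta>) / \<beta>) \<le> n * (4 powr (1+\<beta>) * (K/2) powr (-\<beta>) / \<beta>)"
          using X n1 by (intro mult_left_mono) auto
        show "0 \<le> n * (4 powr (1+\<beta>) * (K/2) powr (-\<beta>) / \<beta>)" using n1 b by simp
      qed (fact Y0 Y)+
      then have "n * (4 powr (1+\<beta>) * real a powr (-\<beta>) / \<beta>) / (real (m - N) * (2 / real Mn) powr \<beta>) / n powr (-\<epsilon>*\<beta>/2)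
          \<le> n * (4 powr (1+\<beta>) * (K/2) powr (-\<beta>) / \<beta>) / ((n powr \<gamma> / 8) * (1 / n powr \<gamma>) powr \<beta>) / n powr (-\<epsilon>*\<beta>/2)"
        using c0 by (intro divide_right_mono) auto
      also have "\<dots> = C * n powr (-\<epsilon>*\<beta>/2)"
        unfolding K_def C_def by (rule T1_identity) (use n1 b chi_def in auto)
      finally show ?thesis .
    qed
    have T2: "8 / real Mn \<le> 8 / n powr \<gamma>" using rMn ng1 by (intro divide_left_mono mult_pos_pos) auto
    have "Q N \<le> C * n powr (-\<epsilon>*\<beta>/2) + 8 / n powr \<gamma> + 8 / n powr d"
    proof -
      have IB': "Q N \<le> n * (4 powr (1+\<beta>) * real a powr (-\<beta>) / \<beta>) / (real (m - N) * (2 / real Mn) powr \<beta>) / n powr (-\<epsilon>*\<beta>/2)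
          + 8 / real Mn + 8 / K"
        using IB unfolding Q_def a_def K_def m_def Mn_def n_def .
      have eq: "8 / K = 8 / n powr d" by (simp add: K_def d_def)
      have "n * (4 powr (1+\<beta>) * real a powr (-\<beta>) / \<beta>) / (real (m - N) * (2 / real Mn) powr \<beta>) / n powr (-\<epsilon>*\<beta>/2)
          + 8 / real Mn + 8 / K \<le> C * n powr (-\<epsilon>*\<beta>/2) + 8 / n powr \<gamma> + 8 / n powr d"
        by (intro add_mono T1 T2) (simp add: eq)
      then show ?thesis using IB' by (rule order_trans[rotated])
    qed
    then have "ln n * Q N \<le> ln n * (C * n powr (-\<epsilon>*\<beta>/2) + 8 / n powr \<gamma> + 8 / n powr d)"
      using ln0 by (intro mult_left_mono)
    then show ?thesis using ln0 Q0 by (simp add: U_def n_def)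
  qed
  have "((\<lambda>N. ln (real N) * Q N) \<longlongrightarrow> 0) sequentially"
  proof (rule tendsto_sandwich[OF _ _ tendsto_const limUN])
    show "eventually (\<lambda>N. 0 \<le> ln (real N) * Q N) sequentially" using ev by eventually_elim (use bnd in blast)
    show "eventually (\<lambda>N. ln (real N) * Q N \<le> U (real N)) sequentially" using ev by eventually_elim (use bnd in blast)
  qed
  then show ?thesis by (simp add: Q_def chi_def)
qed

end
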